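(* Let $n\ge1$, $I=\{1,\dots,n\}$, let $A=(a_{ij})_{n\times n}$ be a symmetric real matrix with $a_{ij}\ge0$ for all $i,j$, let $\boldsymbol\beta=(\beta_1,\dots,\beta_n)$, $\beta_i>0$, satisfy $\Lambda_I(\boldsymbol\beta)=0$ and $\Lambda_J(\boldsymbol\beta)>0$ for all $\emptyset\ne J\subsetneq I$, and let $\boldsymbol v\in(\mathbb R^2)^n$. Let $\boldsymbol\beta_m=(\beta_1^m,\dots,\beta_n^m)$ be a sequence with $\beta_i^m<\beta_i$, $\beta_i^m$ increasing in $m$ and converging to $\beta_i$ for each $i$, such that $\Lambda_J(\boldsymbol\beta_m)>0$ for all $\emptyset\ne J\subseteq I$, and for each $m$ let $\boldsymbol\rho^m=(\rho_1^m,\dots,\rho_n^m)\in\Gamma^{\boldsymbol\beta_m}$ be a minimizer of $\mathcal F_{\boldsymbol v}$ over $\Gamma^{\boldsymbol\beta_m}$. Then $\sup_m\int_{\mathbb R^2}|x|^2\rho_i^m<+\infty$ for all $i$.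
   Context: For $\emptyset\ne J\subseteq I$, $\Lambda_J(\boldsymbol\beta)=\sum_{i\in J}\beta_i\big(8\pi-\sum_{j\in J}a_{ij}\beta_j\big)$. For a vector $\boldsymbol\gamma$ with positive entries, $\Gamma^{\boldsymbol\gamma}$ is the set of $n$-tuples $\boldsymbol\rho=(\rho_1,\dots,\rho_n)$ of measurable functions on $\mathbb R^2$ with $\rho_i\ge0$, $\int\rho_i\ln\rho_i<\infty$, $\int|x|^2\rho_i<\infty$, $\int\rho_i=\gamma_i$ for all $i$. $\mathcal F_{\boldsymbol v}(\boldsymbol\rho)=\sum_{i=1}^n\int_{\mathbb R^2}\rho_i\ln\rho_i+\frac1{4\pi}\sum_{i,j=1}^na_{ij}\int\int\rho_i(x)\ln|x-y|\rho_j(y)\,d^2x\,d^2y+\sum_{i=1}^n\frac12\int_{\mathbb R^2}|x-v_i|^2\rho_i(x)\,d^2x$. *)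

theory Defs
  imports "HOL-Analysis.Analysis"
begin

definition Lambda :: "(nat \<Rightarrow> nat \<Rightarrow> real) \<Rightarrow> (nat \<Rightarrow> real) \<Rightarrow> nat set \<Rightarrow> real" where
  "Lambda A \<beta> J = (\<Sum>i\<in>J. \<beta> i * (8 * pi - (\<Sum>j\<in>J. A i j * \<beta> j)))"

definition Gamma :: "nat \<Rightarrow> (nat \<Rightarrow> real) \<Rightarrow> (nat \<Rightarrow> real ^ 2 \<Rightarrow> real) set" where
  "Gamma n \<gamma> = {\<rho>. \<forall>i\<in>{1..n}.
      \<rho> i \<in> borel_measurable lebesgue \<and>
      (\<forall>x. 0 \<le> \<rho> i x) \<and>
      integrable lebesgue (\<lambda>x. \<rho> i x * ln (\<rho> i x)) \<and>
      integrable lebesgue (\<lambda>x. (norm x)\<^sup>2 * \<rho> i x) \<and>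
      integrable lebesgue (\<rho> i) \<and>
      integral\<^sup>L lebesgue (\<rho> i) = \<gamma> i}"

definition Fv :: "nat \<Rightarrow> (nat \<Rightarrow> nat \<Rightarrow> real) \<Rightarrow> (nat \<Rightarrow> real ^ 2) \<Rightarrow> (nat \<Rightarrow> real ^ 2 \<Rightarrow> real) \<Rightarrow> real" where
  "Fv n A v \<rho> =
     (\<Sum>i\<in>{1..n}. integral\<^sup>L lebesgue (\<lambda>x. \<rho> i x * ln (\<rho> i x)))
   + (1 / (4 * pi)) * (\<Sum>i\<in>{1..n}. \<Sum>j\<in>{1..n}. A i j *
        integral\<^sup>L (lebesgue \<Otimes>\<^sub>M lebesgue) (\<lambda>(x, y). \<rho> i x * ln (norm (x - y)) * \<rho> j y))
   + (\<Sum>i\<in>{1..n}. (1/2) * integral\<^sup>L lebesgue (\<lambda>x. (norm (x - v i))\<^sup>2 * \<rho> i x))"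

end

theory Submission
  imports Defs
begin

lemma transfer_scale:
  fixes g :: "'a \<Rightarrow> real" and K :: real
  assumes T: "T \<in> M \<rightarrow>\<^sub>M M" and Ti: "Ti \<in> M \<rightarrow>\<^sub>M M" and TTi: "\<And>x. T (Ti x) = x"
    and sp: "space M = UNIV" and K: "K > 0"
    and nn: "\<And>f. f \<in> borel_measurable M \<Longrightarrow> (\<integral>\<^sup>+x. f x \<partial>M) = ennreal K * (\<integral>\<^sup>+x. f (T x) \<partial>M)"
  shows "integrable M (\<lambda>x. K * g (T x)) \<longleftrightarrow> integrable M g"
    and "integral\<^sup>L M (\<lambda>x. K * g (T x)) = integral\<^sup>L M g"
proof -
  have meas: "(\<lambda>x. K * g (T x)) \<in> borel_measurable M \<longleftrightarrow> g \<in> borel_measurable M"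
  proof
    assume h: "(\<lambda>x. K * g (T x)) \<in> borel_measurable M"
    have "(\<lambda>x. (1/K) * (K * g (T (Ti x)))) \<in> borel_measurable M"
      using measurable_compose[OF Ti h] by measurable
    moreover have "(\<lambda>x. (1/K) * (K * g (T (Ti x)))) = g" using K TTi by (auto simp: fun_eq_iff)
    ultimately show "g \<in> borel_measurable M" by simp
  next
    assume h: "g \<in> borel_measurable M"
    show "(\<lambda>x. K * g (T x)) \<in> borel_measurable M"
      using measurable_compose[OF T h] by measurable
  qed
  have nnorm: "(\<integral>\<^sup>+x. ennreal (norm (K * g (T x))) \<partial>M) = (\<integral>\<^sup>+x. ennreal (norm (g x)) \<partial>M)"
    if "g \<in> borel_measurable M"
  proof -
    have "(\<integral>\<^sup>+x. ennreal (norm (K * g (T x))) \<partial>M) = (\<integral>\<^sup>+x. ennreal K * ennreal (norm (g (T x))) \<partial>M)"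
      using K by (intro nn_integral_cong) (simp add: abs_mult ennreal_mult)
    also have "\<dots> = ennreal K * (\<integral>\<^sup>+x. ennreal (norm (g (T x))) \<partial>M)"
      using measurable_compose[OF T that] by (intro nn_integral_cmult) measurable
    also have "\<dots> = (\<integral>\<^sup>+x. ennreal (norm (g x)) \<partial>M)"
      using that by (intro nn[symmetric]) measurable
    finally show ?thesis .
  qed
  show int: "integrable M (\<lambda>x. K * g (T x)) \<longleftrightarrow> integrable M g"
    unfolding integrable_iff_bounded using meas nnorm by auto
  have pos: "(\<integral>\<^sup>+x. ennreal (s * (K * g (T x))) \<partial>M) = (\<integral>\<^sup>+x. ennreal (s * g x) \<partial>M)"
    if "g \<in> borel_measurable M" for s :: real
  proof -
    have "(\<integral>\<^sup>+x. ennreal (s * (K * g (T x))) \<partial>M) = (\<integral>\<^sup>+x. ennreal K * ennreal (s * g (T x)) \<partial>M)"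
      using K by (intro nn_integral_cong) (simp add: ennreal_mult' mult.left_commute)
    also have "\<dots> = ennreal K * (\<integral>\<^sup>+x. ennreal (s * g (T x)) \<partial>M)"
      using measurable_compose[OF T that] by (intro nn_integral_cmult) measurable
    also have "\<dots> = (\<integral>\<^sup>+x. ennreal (s * g x) \<partial>M)"
      using that by (intro nn[symmetric]) measurable
    finally show ?thesis .
  qed
  show "integral\<^sup>L M (\<lambda>x. K * g (T x)) = integral\<^sup>L M g"
  proof (cases "integrable M g")
    case True
    then have gm: "g \<in> borel_measurable M" by auto
    have i2: "integrable M (\<lambda>x. K * g (T x))" using True int by simp
    have p1: "(\<integral>\<^sup>+x. ennreal (K * g (T x)) \<partial>M) = (\<integral>\<^sup>+x. ennreal (g x) \<partial>M)"
      using pos[OF gm, of 1] by simp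
    have p2: "(\<integral>\<^sup>+x. ennreal (- (K * g (T x))) \<partial>M) = (\<integral>\<^sup>+x. ennreal (- g x) \<partial>M)"
      using pos[OF gm, of "-1"] by simp
    show ?thesis
      unfolding real_lebesgue_integral_def[OF True] real_lebesgue_integral_def[OF i2] p1 p2 ..

  next
    case False
    then show ?thesis using int by (simp add: not_integrable_integral_eq)
  qed
qed
lemma sf: "sigma_finite_measure (lebesgue :: ('a::euclidean_space) measure)"
proof
  let ?A = "range (\<lambda>k::nat. cball (0::'a) (real k))"
  have "countable ?A \<and> ?A \<subseteq> sets lebesgue \<and> \<Union> ?A = space lebesgue \<and> (\<forall>a\<in>?A. emeasure lebesgue a \<noteq> \<infinity>)"
    using emeasure_bounded_finite[OF bounded_cball] by (auto simp: real_arch_simple less_top)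
  then show "\<exists>A. countable A \<and> A \<subseteq> sets (lebesgue::'a measure) \<and> \<Union> A = space lebesgue \<and> (\<forall>a\<in>A. emeasure lebesgue a \<noteq> \<infinity>)"
    by blast
qed

lemma leb_scale2: "(lebesgue :: (real^2) measure) = density (distr lebesgue lebesgue (\<lambda>x. 2 *\<^sub>R x)) (\<lambda>_. 4)"
proof -
  have T: "(\<lambda>x::real^2. 0 + (\<Sum>j\<in>Basis. (2 * (x \<bullet> j)) *\<^sub>R j)) = (\<lambda>x. 2 *\<^sub>R x)"
    unfolding scaleR_scaleR[symmetric] scaleR_sum_right[symmetric] euclidean_representation by simp
  show ?thesis
    using lebesgue_affine_euclidean[of "\<lambda>_. 2::real" "0::real^2"] unfolding T by simp
qed

lemma nn_scale2:
  fixes f :: "real^2 \<Rightarrow> ennreal"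
  assumes f[measurable]: "f \<in> borel_measurable lebesgue"
  shows "(\<integral>\<^sup>+x. f x \<partial>lebesgue) = ennreal 4 * (\<integral>\<^sup>+x. f (2 *\<^sub>R x) \<partial>lebesgue)"
proof -
  have "(\<integral>\<^sup>+x. f x \<partial>lebesgue) = (\<integral>\<^sup>+x. f x \<partial>density (distr lebesgue lebesgue (\<lambda>x::real^2. 2 *\<^sub>R x)) (\<lambda>_. 4))"
    using leb_scale2 by simp
  also have "\<dots> = \<integral>\<^sup>+ x. ennreal 4 * f x \<partial>distr lebesgue lebesgue (\<lambda>x::real^2. 2 *\<^sub>R x)"
    by (subst nn_integral_density) auto
  also have "\<dots> = ennreal 4 * integral\<^sup>N (distr lebesgue lebesgue (\<lambda>x::real^2. 2 *\<^sub>R x)) f"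
    using f measurable_distr_eq1 nn_integral_cmult by blast
  also have "\<dots> = ennreal 4 * (\<integral>\<^sup>+x. f (2 *\<^sub>R x) \<partial>lebesgue)"
    by (subst nn_integral_distr) auto
  finally show ?thesis .
qed

lemma nn_scale_pair:
  fixes f :: "(real^2) \<times> (real^2) \<Rightarrow> ennreal"
  assumes f[measurable]: "f \<in> borel_measurable (lebesgue \<Otimes>\<^sub>M lebesgue)"
  shows "(\<integral>\<^sup>+z. f z \<partial>(lebesgue \<Otimes>\<^sub>M lebesgue)) = ennreal 16 * (\<integral>\<^sup>+z. f (2 *\<^sub>R fst z, 2 *\<^sub>R snd z) \<partial>(lebesgue \<Otimes>\<^sub>M lebesgue))"
proof -
  interpret L: sigma_finite_measure "lebesgue :: (real^2) measure" by (rule sf)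
  have m1: "(\<lambda>z. f (fst z, 2 *\<^sub>R snd z)) \<in> borel_measurable (lebesgue \<Otimes>\<^sub>M lebesgue)" by measurable
  have m2: "(\<lambda>z. f (2 *\<^sub>R fst z, 2 *\<^sub>R snd z)) \<in> borel_measurable (lebesgue \<Otimes>\<^sub>M lebesgue)" by measurable
  have "(\<integral>\<^sup>+z. f z \<partial>(lebesgue \<Otimes>\<^sub>M lebesgue)) = (\<integral>\<^sup>+x. \<integral>\<^sup>+y. f (x, y) \<partial>lebesgue \<partial>lebesgue)"
    by (rule L.nn_integral_fst[symmetric]) simp
  also have "\<dots> = (\<integral>\<^sup>+x. ennreal 4 * (\<integral>\<^sup>+y. f (x, 2 *\<^sub>R y) \<partial>lebesgue) \<partial>lebesgue)"
    by (intro nn_integral_cong nn_scale2) measurable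
  also have "\<dots> = ennreal 4 * (\<integral>\<^sup>+x. (\<integral>\<^sup>+y. f (x, 2 *\<^sub>R y) \<partial>lebesgue) \<partial>lebesgue)"
    using L.borel_measurable_nn_integral_fst[OF m1] by (intro nn_integral_cmult) simp
  also have "(\<integral>\<^sup>+x. (\<integral>\<^sup>+y. f (x, 2 *\<^sub>R y) \<partial>lebesgue) \<partial>lebesgue)
      = ennreal 4 * (\<integral>\<^sup>+x. (\<integral>\<^sup>+y. f (2 *\<^sub>R x, 2 *\<^sub>R y) \<partial>lebesgue) \<partial>lebesgue)"
    using L.borel_measurable_nn_integral_fst[OF m1] by (intro nn_scale2) simp
  also have "(\<integral>\<^sup>+x. (\<integral>\<^sup>+y. f (2 *\<^sub>R x, 2 *\<^sub>R y) \<partial>lebesgue) \<partial>lebesgue)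
      = (\<integral>\<^sup>+z. f (2 *\<^sub>R fst z, 2 *\<^sub>R snd z) \<partial>(lebesgue \<Otimes>\<^sub>M lebesgue))"
    using L.nn_integral_fst[OF m2] by simp
  finally show ?thesis by (simp add: mult.assoc[symmetric] ennreal_mult'[symmetric])
qed
lemma int_scale2:
  fixes g :: "real^2 \<Rightarrow> real"
  shows "integrable lebesgue (\<lambda>x. 4 * g (2 *\<^sub>R x)) \<longleftrightarrow> integrable lebesgue g"
    and "integral\<^sup>L lebesgue (\<lambda>x. 4 * g (2 *\<^sub>R x)) = integral\<^sup>L lebesgue g"
proof -
  have TTi: "\<And>x::real^2. 2 *\<^sub>R ((1/2) *\<^sub>R x) = x" by simp
  have space_leb: "space (lebesgue::(real^2) measure) = UNIV" by simp
  note tr = transfer_scale[OF lebesgue_measurable_scaling lebesgue_measurable_scaling TTi space_leb _ nn_scale2, where g=g]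
  show "integrable lebesgue (\<lambda>x. 4 * g (2 *\<^sub>R x)) \<longleftrightarrow> integrable lebesgue g" using tr(1) by simp
  show "integral\<^sup>L lebesgue (\<lambda>x. 4 * g (2 *\<^sub>R x)) = integral\<^sup>L lebesgue g" using tr(2) by simp
qed

lemma int_scale_pair:
  fixes g :: "(real^2) \<times> (real^2) \<Rightarrow> real"
  shows "integrable (lebesgue \<Otimes>\<^sub>M lebesgue) (\<lambda>z. 16 * g (2 *\<^sub>R fst z, 2 *\<^sub>R snd z)) \<longleftrightarrow> integrable (lebesgue \<Otimes>\<^sub>M lebesgue) g"
    and "integral\<^sup>L (lebesgue \<Otimes>\<^sub>M lebesgue) (\<lambda>z. 16 * g (2 *\<^sub>R fst z, 2 *\<^sub>R snd z)) = integral\<^sup>L (lebesgue \<Otimes>\<^sub>M lebesgue) g"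
proof -
  have T: "(\<lambda>z::(real^2) \<times> (real^2). (2 *\<^sub>R fst z, 2 *\<^sub>R snd z)) \<in> (lebesgue \<Otimes>\<^sub>M lebesgue) \<rightarrow>\<^sub>M (lebesgue \<Otimes>\<^sub>M lebesgue)"
    by measurable
  have Ti: "(\<lambda>z::(real^2) \<times> (real^2). ((1/2) *\<^sub>R fst z, (1/2) *\<^sub>R snd z)) \<in> (lebesgue \<Otimes>\<^sub>M lebesgue) \<rightarrow>\<^sub>M (lebesgue \<Otimes>\<^sub>M lebesgue)"
    by measurable
  have TTi: "\<And>z::(real^2) \<times> (real^2). (\<lambda>z. (2 *\<^sub>R fst z, 2 *\<^sub>R snd z)) ((\<lambda>z. ((1/2) *\<^sub>R fst z, (1/2) *\<^sub>R snd z)) z) = z"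
    by simp
  have sp: "space (lebesgue \<Otimes>\<^sub>M lebesgue :: ((real^2) \<times> (real^2)) measure) = UNIV"
    by (simp add: space_pair_measure)
  have K: "(0::real) < 16" by simp
  note tr = transfer_scale[OF T Ti TTi sp K nn_scale_pair, where g=g]
  show "integrable (lebesgue \<Otimes>\<^sub>M lebesgue) (\<lambda>z. 16 * g (2 *\<^sub>R fst z, 2 *\<^sub>R snd z)) \<longleftrightarrow> integrable (lebesgue \<Otimes>\<^sub>M lebesgue) g"
    using tr(1) by simp
  show "integral\<^sup>L (lebesgue \<Otimes>\<^sub>M lebesgue) (\<lambda>z. 16 * g (2 *\<^sub>R fst z, 2 *\<^sub>R snd z)) = integral\<^sup>L (lebesgue \<Otimes>\<^sub>M lebesgue) g"
    using tr(2) by simp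
qed

lemma int_prod:
  fixes f g :: "real^2 \<Rightarrow> real"
  assumes f: "integrable lebesgue f" and g: "integrable lebesgue g"
  shows "integrable (lebesgue \<Otimes>\<^sub>M lebesgue) (\<lambda>z. f (fst z) * g (snd z))"
proof -
  interpret L: sigma_finite_measure "lebesgue :: (real^2) measure" by (rule sf)
  have [measurable]: "f \<in> borel_measurable lebesgue" "g \<in> borel_measurable lebesgue" using f g by auto
  have m: "(\<lambda>z. ennreal (norm (f (fst z) * g (snd z)))) \<in> borel_measurable (lebesgue \<Otimes>\<^sub>M lebesgue)" by measurable
  have "(\<integral>\<^sup>+z. ennreal (norm (f (fst z) * g (snd z))) \<partial>(lebesgue \<Otimes>\<^sub>M lebesgue))
      = (\<integral>\<^sup>+x. \<integral>\<^sup>+y. ennreal (norm (f x)) * ennreal (norm (g y)) \<partial>lebesgue \<partial>lebesgue)"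
    using L.nn_integral_fst[OF m] by (simp add: abs_mult ennreal_mult)
  also have "\<dots> = (\<integral>\<^sup>+x. ennreal (norm (f x)) * (\<integral>\<^sup>+y. ennreal (norm (g y)) \<partial>lebesgue) \<partial>lebesgue)"
    by (intro nn_integral_cong nn_integral_cmult) measurable
  also have "\<dots> = (\<integral>\<^sup>+x. ennreal (norm (f x)) \<partial>lebesgue) * (\<integral>\<^sup>+y. ennreal (norm (g y)) \<partial>lebesgue)"
    by (intro nn_integral_multc) measurable
  also have "\<dots> < \<infinity>"
    using f g unfolding integrable_iff_bounded by (simp add: ennreal_mult_less_top)
  finally show ?thesis unfolding integrable_iff_bounded using m by auto
qed

lemma norm_diff_sq: "(norm (a - b :: 'a::real_normed_vector))^2 \<le> 2 * (norm a)^2 + 2 * (norm b)^2"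
proof -
  have "norm (a - b) \<le> norm a + norm b" by (rule norm_triangle_ineq4)
  then have "(norm (a - b))^2 \<le> (norm a + norm b)^2" by (simp add: power_mono)
  also have "\<dots> \<le> 2 * (norm a)^2 + 2 * (norm b)^2"
    using sum_squares_ge_zero by (smt (verit) power2_sum sum_power2_ge_zero zero_le_power2 power2_diff)
  finally show ?thesis .
qed

lemma mom_shift:
  fixes r :: "real^2 \<Rightarrow> real"
  assumes m[measurable]: "r \<in> borel_measurable lebesgue" and nn: "\<And>x. 0 \<le> r x"
    and i1: "integrable lebesgue r" and i2: "integrable lebesgue (\<lambda>x. (norm x)\<^sup>2 * r x)"
  shows "integrable lebesgue (\<lambda>x. (norm (c *\<^sub>R x - w))\<^sup>2 * r x)"
proof (rule Bochner_Integration.integrable_bound)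
  show "integrable lebesgue (\<lambda>x. 2 * c^2 * ((norm x)\<^sup>2 * r x) + 2 * (norm w)^2 * r x)"
    using i1 i2 by auto
  show "(\<lambda>x. (norm (c *\<^sub>R x - w))\<^sup>2 * r x) \<in> borel_measurable lebesgue"
  proof -
    have h: "(\<lambda>x::real^2. (norm (c *\<^sub>R x - w))\<^sup>2) \<in> borel_measurable borel"
      by (intro borel_measurable_continuous_onI continuous_intros)
    have "(\<lambda>x::real^2. (norm (c *\<^sub>R x - w))\<^sup>2) \<in> borel_measurable lebesgue"
      using measurable_compose[OF id_borel_measurable_lebesgue h] by (simp add: o_def)
    then show ?thesis using m by (intro borel_measurable_times) auto
  qed
  show "AE x in lebesgue. norm ((norm (c *\<^sub>R x - w))\<^sup>2 * r x) \<le> norm (2 * c^2 * ((norm x)\<^sup>2 * r x) + 2 * (norm w)^2 * r x)"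
  proof (rule AE_I2)
    fix x
    have "(norm (c *\<^sub>R x - w))\<^sup>2 \<le> 2 * (norm (c *\<^sub>R x))^2 + 2 * (norm w)^2" by (rule norm_diff_sq)
    also have "(norm (c *\<^sub>R x))^2 = c^2 * (norm x)^2" by (simp add: power_mult_distrib)
    finally have "(norm (c *\<^sub>R x - w))\<^sup>2 * r x \<le> (2 * c^2 * (norm x)^2 + 2 * (norm w)^2) * r x"
      using nn[of x] by (intro mult_right_mono) auto
    then show "norm ((norm (c *\<^sub>R x - w))\<^sup>2 * r x) \<le> norm (2 * c^2 * ((norm x)\<^sup>2 * r x) + 2 * (norm w)^2 * r x)"
      using nn[of x] by (simp add: algebra_simps)
  qed
qed

lemma diff_pair_meas[measurable]:
  "(\<lambda>z::(real^2) \<times> (real^2). fst z - snd z) \<in> borel_measurable (lebesgue \<Otimes>\<^sub>M lebesgue)"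
proof -
  have "(\<lambda>z::(real^2) \<times> (real^2). fst z) \<in> borel_measurable (lebesgue \<Otimes>\<^sub>M lebesgue)"
    using measurable_compose[OF measurable_fst id_borel_measurable_lebesgue] by (simp add: o_def)
  moreover have "(\<lambda>z::(real^2) \<times> (real^2). snd z) \<in> borel_measurable (lebesgue \<Otimes>\<^sub>M lebesgue)"
    using measurable_compose[OF measurable_snd id_borel_measurable_lebesgue] by (simp add: o_def)
  ultimately show ?thesis by (rule borel_measurable_diff)
qed

lemma cross:
  fixes r s :: "real^2 \<Rightarrow> real"
  assumes rm[measurable]: "r \<in> borel_measurable lebesgue" and sm[measurable]: "s \<in> borel_measurable lebesgue"
    and rnn: "\<And>x. 0 \<le> r x" and snn: "\<And>x. 0 \<le> s x"
    and ri: "integrable lebesgue r" and si: "integrable lebesgue s"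
  shows "integral\<^sup>L (lebesgue \<Otimes>\<^sub>M lebesgue) (\<lambda>(x, y). (4 * r (2 *\<^sub>R x)) * ln (norm (x - y)) * (4 * s (2 *\<^sub>R y)))
     \<le> integral\<^sup>L (lebesgue \<Otimes>\<^sub>M lebesgue) (\<lambda>(x, y). r x * ln (norm (x - y)) * s y)"
proof -
  define F where "F = (\<lambda>(x::real^2, y::real^2). r x * ln (norm (x - y)) * s y)"
  define G where "G = (\<lambda>(x::real^2, y::real^2). r x * ln (norm (x - y) / 2) * s y)"
  define D where "D = (\<lambda>(x::real^2, y::real^2). r x * s y * (ln (norm (x - y) / 2) - ln (norm (x - y))))"
  have GFD: "G = (\<lambda>z. F z + D z)" by (auto simp: F_def G_def D_def fun_eq_iff algebra_simps)
  have phi: "(\<lambda>t::real^2. ln (norm t / 2) - ln (norm t)) \<in> borel_measurable borel" by measurable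
  have phi2: "(\<lambda>t::real^2. ln (norm t)) \<in> borel_measurable borel" by measurable
  have phi3: "(\<lambda>t::real^2. ln (norm t / 2)) \<in> borel_measurable borel" by measurable
  have c1: "(\<lambda>z::(real^2) \<times> (real^2). ln (norm (fst z - snd z) / 2) - ln (norm (fst z - snd z))) \<in> borel_measurable (lebesgue \<Otimes>\<^sub>M lebesgue)"
    using measurable_compose[OF diff_pair_meas phi] by simp
  have c2: "(\<lambda>z::(real^2) \<times> (real^2). ln (norm (fst z - snd z))) \<in> borel_measurable (lebesgue \<Otimes>\<^sub>M lebesgue)"
    using measurable_compose[OF diff_pair_meas phi2] by simp
  have c3: "(\<lambda>z::(real^2) \<times> (real^2). ln (norm (fst z - snd z) / 2)) \<in> borel_measurable (lebesgue \<Otimes>\<^sub>M lebesgue)"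
    using measurable_compose[OF diff_pair_meas phi3] by simp
  have rs: "(\<lambda>z::(real^2) \<times> (real^2). r (fst z)) \<in> borel_measurable (lebesgue \<Otimes>\<^sub>M lebesgue)"
    "(\<lambda>z::(real^2) \<times> (real^2). s (snd z)) \<in> borel_measurable (lebesgue \<Otimes>\<^sub>M lebesgue)" by measurable
  have Dm: "D \<in> borel_measurable (lebesgue \<Otimes>\<^sub>M lebesgue)"
  proof -
    have "D = (\<lambda>z. r (fst z) * s (snd z) * (ln (norm (fst z - snd z) / 2) - ln (norm (fst z - snd z))))"
      by (auto simp: D_def fun_eq_iff)
    then show ?thesis using c1 rs by (simp add: borel_measurable_times)
  qed
  have Fm: "F \<in> borel_measurable (lebesgue \<Otimes>\<^sub>M lebesgue)"
  proof -
    have "F = (\<lambda>z. r (fst z) * ln (norm (fst z - snd z)) * s (snd z))"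
      by (auto simp: F_def fun_eq_iff)
    then show ?thesis using c2 rs by (simp add: borel_measurable_times)
  qed
  have Dle: "D z \<le> 0" and Dbd: "norm (D z) \<le> norm (ln 2 * (r (fst z) * s (snd z)))" for z
  proof -
    obtain x y where z: "z = (x, y)" by (cases z)
    have e: "ln (norm (x - y) / 2) - ln (norm (x - y)) = (if norm (x - y) = 0 then 0 else - ln 2)"
      by (auto simp: ln_div)
    have p: "0 \<le> r x * s y" using rnn snn by simp
    show "D z \<le> 0" using p by (auto simp: z D_def e mult_nonneg_nonpos)
    show "norm (D z) \<le> norm (ln 2 * (r (fst z) * s (snd z)))"
      using p by (auto simp: z D_def e abs_mult)
  qed
  have Dint: "integrable (lebesgue \<Otimes>\<^sub>M lebesgue) D"
  proof -
    have "integrable (lebesgue \<Otimes>\<^sub>M lebesgue) (\<lambda>z. ln 2 * (r (fst z) * s (snd z)))"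
      using int_prod[OF ri si] by simp
    from Bochner_Integration.integrable_bound[OF this Dm] show ?thesis
      using Dbd by (simp add: AE_I2)
  qed
  have T: "(\<lambda>(x, y). (4 * r (2 *\<^sub>R x)) * ln (norm (x - y)) * (4 * s (2 *\<^sub>R y)))
      = (\<lambda>z. 16 * G (2 *\<^sub>R fst z, 2 *\<^sub>R snd z))"
  proof
    fix z :: "(real^2) \<times> (real^2)"
    obtain x y where z: "z = (x, y)" by (cases z)
    have "norm (2 *\<^sub>R x - 2 *\<^sub>R y) / 2 = norm (x - y)"
      by (simp add: scaleR_diff_right[symmetric])
    then show "(\<lambda>(x, y). (4 * r (2 *\<^sub>R x)) * ln (norm (x - y)) * (4 * s (2 *\<^sub>R y))) z = 16 * G (2 *\<^sub>R fst z, 2 *\<^sub>R snd z)"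
      by (simp add: z G_def)
  qed
  show ?thesis
  proof (cases "integrable (lebesgue \<Otimes>\<^sub>M lebesgue) F")
    case True
    have Gi: "integrable (lebesgue \<Otimes>\<^sub>M lebesgue) G" unfolding GFD using True Dint by simp
    have "integral\<^sup>L (lebesgue \<Otimes>\<^sub>M lebesgue) G \<le> integral\<^sup>L (lebesgue \<Otimes>\<^sub>M lebesgue) F"
      using Gi True by (rule integral_mono) (simp add: GFD add_le_same_cancel1 Dle)
    then show ?thesis unfolding T int_scale_pair(2) F_def .
  next
    case False
    have Gn: "\<not> integrable (lebesgue \<Otimes>\<^sub>M lebesgue) G"
    proof
      assume "integrable (lebesgue \<Otimes>\<^sub>M lebesgue) G"
      then have "integrable (lebesgue \<Otimes>\<^sub>M lebesgue) (\<lambda>z. G z - D z)" using Dint by simp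
      moreover have "(\<lambda>z. G z - D z) = F" by (simp add: GFD)
      ultimately show False using False by simp
    qed
    have "\<not> integrable (lebesgue \<Otimes>\<^sub>M lebesgue) (\<lambda>z. 16 * G (2 *\<^sub>R fst z, 2 *\<^sub>R snd z))"
      unfolding int_scale_pair(1) by (rule Gn)
    then have "integral\<^sup>L (lebesgue \<Otimes>\<^sub>M lebesgue) (\<lambda>z. 16 * G (2 *\<^sub>R fst z, 2 *\<^sub>R snd z)) = 0"
      by (rule not_integrable_integral_eq)
    moreover have "integral\<^sup>L (lebesgue \<Otimes>\<^sub>M lebesgue) F = 0"
      using False by (rule not_integrable_integral_eq)
    ultimately show ?thesis
      unfolding T F_def[symmetric] by simp
  qed
qed


lemma pot_ineq: "(norm ((1/2) *\<^sub>R y - w))\<^sup>2 \<le> (norm (y - w))\<^sup>2 - (1/2) * (norm y)\<^sup>2 + (norm w)\<^sup>2"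
  for y w :: "real^2"
proof -
  have "(norm (y - w))\<^sup>2 - (1/2) * (norm y)\<^sup>2 + (norm w)\<^sup>2 - (norm ((1/2) *\<^sub>R y - w))\<^sup>2
      = (norm ((1/2) *\<^sub>R y - w))\<^sup>2"
    by (simp add: power2_norm_eq_inner inner_diff_left inner_diff_right inner_commute algebra_simps)
  then show ?thesis by (smt (verit) zero_le_power2)
qed

lemma key:
  fixes n :: nat and A :: "nat \<Rightarrow> nat \<Rightarrow> real" and v :: "nat \<Rightarrow> real^2"
    and b :: "nat \<Rightarrow> real" and \<rho> :: "nat \<Rightarrow> real^2 \<Rightarrow> real"
  assumes A_nonneg: "\<forall>i\<in>{1..n}. \<forall>j\<in>{1..n}. A i j \<ge> 0"
    and rin: "\<rho> \<in> Gamma n b"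
    and rmin: "\<forall>\<sigma>\<in>Gamma n b. Fv n A v \<rho> \<le> Fv n A v \<sigma>"
  shows "(\<Sum>i\<in>{1..n}. integral\<^sup>L lebesgue (\<lambda>x. (norm x)\<^sup>2 * \<rho> i x))
      \<le> 4 * (\<Sum>i\<in>{1..n}. ln 4 * b i + (1/2) * (norm (v i))\<^sup>2 * b i)"
proof -
  define \<sigma> where "\<sigma> = (\<lambda>i (x::real^2). 4 * \<rho> i (2 *\<^sub>R x))"
  have rm: "\<rho> i \<in> borel_measurable lebesgue" and rnn: "\<And>x. 0 \<le> \<rho> i x"
    and rent: "integrable lebesgue (\<lambda>x. \<rho> i x * ln (\<rho> i x))"
    and rmom: "integrable lebesgue (\<lambda>x. (norm x)\<^sup>2 * \<rho> i x)"
    and rint: "integrable lebesgue (\<rho> i)" and rtot: "integral\<^sup>L lebesgue (\<rho> i) = b i"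
    if "i \<in> {1..n}" for i
    using rin that unfolding Gamma_def by auto
  define M where "M = (\<lambda>i. integral\<^sup>L lebesgue (\<lambda>x. (norm x)\<^sup>2 * \<rho> i x))"
  have ent: "integrable lebesgue (\<lambda>x. \<sigma> i x * ln (\<sigma> i x)) \<and>
      integral\<^sup>L lebesgue (\<lambda>x. \<sigma> i x * ln (\<sigma> i x)) = integral\<^sup>L lebesgue (\<lambda>x. \<rho> i x * ln (\<rho> i x)) + ln 4 * b i"
    if i: "i \<in> {1..n}" for i
  proof -
    let ?h = "\<lambda>y. \<rho> i y * ln (\<rho> i y) + ln 4 * \<rho> i y"
    have hi: "integrable lebesgue ?h" using rent[OF i] rint[OF i] by auto
    have eq: "(\<lambda>x. \<sigma> i x * ln (\<sigma> i x)) = (\<lambda>x. 4 * ?h (2 *\<^sub>R x))"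
    proof
      fix x
      show "\<sigma> i x * ln (\<sigma> i x) = 4 * ?h (2 *\<^sub>R x)"
      proof (cases "\<rho> i (2 *\<^sub>R x) = 0")
        case True then show ?thesis by (simp add: \<sigma>_def)
      next
        case False
        then have "\<rho> i (2 *\<^sub>R x) > 0" using rnn[OF i, of "2 *\<^sub>R x"] by simp
        then show ?thesis by (simp add: \<sigma>_def ln_mult algebra_simps)
      qed
    qed
    have hv: "integral\<^sup>L lebesgue ?h = integral\<^sup>L lebesgue (\<lambda>x. \<rho> i x * ln (\<rho> i x)) + ln 4 * b i"
      using rent[OF i] rint[OF i] rtot[OF i] by simp
    have I: "integrable lebesgue (\<lambda>x. 4 * ?h (2 *\<^sub>R x))" using int_scale2(1)[of ?h] hi by blast
    have J: "integral\<^sup>L lebesgue (\<lambda>x. 4 * ?h (2 *\<^sub>R x)) = integral\<^sup>L lebesgue ?h" by (rule int_scale2(2))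
    show ?thesis unfolding eq by (intro conjI I) (simp only: J hv)
  qed
  have mom: "integrable lebesgue (\<lambda>x. (norm x)\<^sup>2 * \<sigma> i x) \<and>
      integral\<^sup>L lebesgue (\<lambda>x. (norm x)\<^sup>2 * \<sigma> i x) = (1/4) * M i"
    if i: "i \<in> {1..n}" for i
  proof -
    let ?h = "\<lambda>y. (1/4) * ((norm y)\<^sup>2 * \<rho> i y)"
    have hi: "integrable lebesgue ?h" using rmom[OF i] by auto
    have eq: "(\<lambda>x. (norm x)\<^sup>2 * \<sigma> i x) = (\<lambda>x. 4 * ?h (2 *\<^sub>R x))"
      by (auto simp: \<sigma>_def power_mult_distrib fun_eq_iff)
    have hv: "integral\<^sup>L lebesgue ?h = (1/4) * M i" using rmom[OF i] by (simp add: M_def)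
    have I: "integrable lebesgue (\<lambda>x. 4 * ?h (2 *\<^sub>R x))" using int_scale2(1)[of ?h] hi by blast
    have J: "integral\<^sup>L lebesgue (\<lambda>x. 4 * ?h (2 *\<^sub>R x)) = integral\<^sup>L lebesgue ?h" by (rule int_scale2(2))
    show ?thesis unfolding eq by (intro conjI I) (simp only: J hv)
  qed
  have tot: "integrable lebesgue (\<sigma> i) \<and> integral\<^sup>L lebesgue (\<sigma> i) = b i" if i: "i \<in> {1..n}" for i
  proof -
    have eq: "\<sigma> i = (\<lambda>x. 4 * \<rho> i (2 *\<^sub>R x))" by (simp add: \<sigma>_def)
    have I: "integrable lebesgue (\<lambda>x. 4 * \<rho> i (2 *\<^sub>R x))" using int_scale2(1)[of "\<rho> i"] rint[OF i] by blast
    have J: "integral\<^sup>L lebesgue (\<lambda>x. 4 * \<rho> i (2 *\<^sub>R x)) = integral\<^sup>L lebesgue (\<rho> i)" by (rule int_scale2(2))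
    show ?thesis unfolding eq by (intro conjI I) (simp only: J rtot[OF i])
  qed
  have smeas: "\<sigma> i \<in> borel_measurable lebesgue" if i: "i \<in> {1..n}" for i
    using tot[OF i] by auto
  have sG: "\<sigma> \<in> Gamma n b"
    unfolding Gamma_def using smeas ent mom tot rnn by (auto simp: \<sigma>_def)
  have pot: "integral\<^sup>L lebesgue (\<lambda>x. (norm (x - v i))\<^sup>2 * \<sigma> i x)
      \<le> integral\<^sup>L lebesgue (\<lambda>x. (norm (x - v i))\<^sup>2 * \<rho> i x) - (1/2) * M i + (norm (v i))\<^sup>2 * b i"
    if i: "i \<in> {1..n}" for i
  proof -
    let ?h = "\<lambda>y. (norm ((1/2) *\<^sub>R y - v i))\<^sup>2 * \<rho> i y"
    have eq: "(\<lambda>x. (norm (x - v i))\<^sup>2 * \<sigma> i x) = (\<lambda>x. 4 * ?h (2 *\<^sub>R x))"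
      by (auto simp: \<sigma>_def fun_eq_iff)
    have hi: "integrable lebesgue ?h"
      by (rule mom_shift[OF rm[OF i] rnn[OF i] rint[OF i] rmom[OF i]])
    have pi: "integrable lebesgue (\<lambda>x. (norm (x - v i))\<^sup>2 * \<rho> i x)"
      using mom_shift[OF rm[OF i] rnn[OF i] rint[OF i] rmom[OF i], of 1 "v i"] by simp
    let ?g = "\<lambda>y. (norm (y - v i))\<^sup>2 * \<rho> i y - (1/2) * ((norm y)\<^sup>2 * \<rho> i y) + (norm (v i))\<^sup>2 * \<rho> i y"
    have gi: "integrable lebesgue ?g" using pi rmom[OF i] rint[OF i] by auto
    have "integral\<^sup>L lebesgue ?h \<le> integral\<^sup>L lebesgue ?g"
    proof (rule integral_mono[OF hi gi])
      fix y
      have "(norm ((1/2) *\<^sub>R y - v i))\<^sup>2 * \<rho> i y \<le> ((norm (y - v i))\<^sup>2 - (1/2) * (norm y)\<^sup>2 + (norm (v i))\<^sup>2) * \<rho> i y"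
        using rnn[OF i, of y] pot_ineq[of y "v i"] by (intro mult_right_mono) auto
      then show "?h y \<le> ?g y" by (simp add: algebra_simps)
    qed
    also have "integral\<^sup>L lebesgue ?g = integral\<^sup>L lebesgue (\<lambda>x. (norm (x - v i))\<^sup>2 * \<rho> i x) - (1/2) * M i + (norm (v i))\<^sup>2 * b i"
      using pi rmom[OF i] rint[OF i] rtot[OF i] by (simp add: M_def)
    finally show ?thesis unfolding eq int_scale2(2)[of ?h] .
  qed
  have cr: "A i j * integral\<^sup>L (lebesgue \<Otimes>\<^sub>M lebesgue) (\<lambda>(x, y). \<sigma> i x * ln (norm (x - y)) * \<sigma> j y)
      \<le> A i j * integral\<^sup>L (lebesgue \<Otimes>\<^sub>M lebesgue) (\<lambda>(x, y). \<rho> i x * ln (norm (x - y)) * \<rho> j y)"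
    if i: "i \<in> {1..n}" and j: "j \<in> {1..n}" for i j
    using cross[OF rm[OF i] rm[OF j] rnn[OF i] rnn[OF j] rint[OF i] rint[OF j]] A_nonneg i j
    by (intro mult_left_mono) (auto simp: \<sigma>_def)
  define E where "E = (\<lambda>f::nat \<Rightarrow> real^2 \<Rightarrow> real. \<Sum>i\<in>{1..n}. integral\<^sup>L lebesgue (\<lambda>x. f i x * ln (f i x)))"
  define C where "C = (\<lambda>f::nat \<Rightarrow> real^2 \<Rightarrow> real. \<Sum>i\<in>{1..n}. \<Sum>j\<in>{1..n}. A i j *
        integral\<^sup>L (lebesgue \<Otimes>\<^sub>M lebesgue) (\<lambda>(x, y). f i x * ln (norm (x - y)) * f j y))"
  define P where "P = (\<lambda>f::nat \<Rightarrow> real^2 \<Rightarrow> real. \<Sum>i\<in>{1..n}. (1/2) * integral\<^sup>L lebesgue (\<lambda>x. (norm (x - v i))\<^sup>2 * f i x))"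
  have Fv_eq: "Fv n A v f = E f + (1 / (4 * pi)) * C f + P f" for f
    by (simp add: Fv_def E_def C_def P_def)
  have E1: "E \<sigma> = E \<rho> + (\<Sum>i\<in>{1..n}. ln 4 * b i)"
    unfolding E_def sum.distrib[symmetric] using ent by (intro sum.cong) auto
  have C1: "C \<sigma> \<le> C \<rho>"
    unfolding C_def using cr by (intro sum_mono) auto
  have P1: "P \<sigma> \<le> (\<Sum>i\<in>{1..n}. (1/2) * (integral\<^sup>L lebesgue (\<lambda>x. (norm (x - v i))\<^sup>2 * \<rho> i x) - (1/2) * M i + (norm (v i))\<^sup>2 * b i))"
    unfolding P_def using pot by (intro sum_mono) auto
  also have "\<dots> = P \<rho> - (1/4) * (\<Sum>i\<in>{1..n}. M i) + (\<Sum>i\<in>{1..n}. (1/2) * (norm (v i))\<^sup>2 * b i)"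
    unfolding P_def by (simp add: sum.distrib sum_subtractf sum_distrib_left algebra_simps)
  finally have P2: "P \<sigma> \<le> P \<rho> - (1/4) * (\<Sum>i\<in>{1..n}. M i) + (\<Sum>i\<in>{1..n}. (1/2) * (norm (v i))\<^sup>2 * b i)" .
  have k: "(1 / (4 * pi)) * C \<sigma> \<le> (1 / (4 * pi)) * C \<rho>"
    using C1 by (intro mult_left_mono) auto
  have "Fv n A v \<rho> \<le> Fv n A v \<sigma>" using rmin sG by auto
  then have "(1/4) * (\<Sum>i\<in>{1..n}. M i) \<le> (\<Sum>i\<in>{1..n}. ln 4 * b i) + (\<Sum>i\<in>{1..n}. (1/2) * (norm (v i))\<^sup>2 * b i)"
    unfolding Fv_eq using E1 P2 k by linarith
  then show ?thesis unfolding M_def by (simp add: sum.distrib)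
qed

theorem lemma8:
  fixes n :: nat
    and A :: "nat \<Rightarrow> nat \<Rightarrow> real"
    and \<beta> :: "nat \<Rightarrow> real"
    and v :: "nat \<Rightarrow> real ^ 2"
    and \<beta>m :: "nat \<Rightarrow> nat \<Rightarrow> real"
    and \<rho> :: "nat \<Rightarrow> nat \<Rightarrow> real ^ 2 \<Rightarrow> real"
  assumes n_pos: "n \<ge> 1"
    and A_sym: "\<forall>i\<in>{1..n}. \<forall>j\<in>{1..n}. A i j = A j i"
    and A_nonneg: "\<forall>i\<in>{1..n}. \<forall>j\<in>{1..n}. A i j \<ge> 0"
    and \<beta>_pos: "\<forall>i\<in>{1..n}. \<beta> i > 0"
    and Lambda_I: "Lambda A \<beta> {1..n} = 0"
    and Lambda_J: "\<forall>J. J \<noteq> {} \<and> J \<subset> {1..n} \<longrightarrow> Lambda A \<beta> J > 0"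
    and \<beta>m_less: "\<forall>m. \<forall>i\<in>{1..n}. \<beta>m m i < \<beta> i"
    and \<beta>m_inc: "\<forall>i\<in>{1..n}. incseq (\<lambda>m. \<beta>m m i)"
    and \<beta>m_lim: "\<forall>i\<in>{1..n}. (\<lambda>m. \<beta>m m i) \<longlonglongrightarrow> \<beta> i"
    and \<beta>m_Lambda: "\<forall>m. \<forall>J. J \<noteq> {} \<and> J \<subseteq> {1..n} \<longrightarrow> Lambda A (\<beta>m m) J > 0"
    and \<rho>_in: "\<forall>m. \<rho> m \<in> Gamma n (\<beta>m m)"
    and \<rho>_min: "\<forall>m. \<forall>\<sigma>\<in>Gamma n (\<beta>m m). Fv n A v (\<rho> m) \<le> Fv n A v \<sigma>"
  shows "\<forall>i\<in>{1..n}. \<exists>C. \<forall>m. integral\<^sup>L lebesgue (\<lambda>x. (norm x)\<^sup>2 * \<rho> m i x) \<le> C"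
proof -
  let ?C = "4 * (\<Sum>i\<in>{1..n}. ln 4 * \<beta> i + (1/2) * (norm (v i))\<^sup>2 * \<beta> i)"
  show ?thesis
  proof (intro ballI exI[where x="?C"] allI)
    fix i m assume i: "i \<in> {1..n}"
    have nn: "0 \<le> integral\<^sup>L lebesgue (\<lambda>x. (norm x)\<^sup>2 * \<rho> m k x)" if k: "k \<in> {1..n}" for k
    proof -
      have "\<forall>x. 0 \<le> \<rho> m k x" using \<rho>_in k unfolding Gamma_def by auto
      then show ?thesis by (intro integral_nonneg_AE AE_I2) simp
    qed
    have "integral\<^sup>L lebesgue (\<lambda>x. (norm x)\<^sup>2 * \<rho> m i x)
        \<le> (\<Sum>k\<in>{1..n}. integral\<^sup>L lebesgue (\<lambda>x. (norm x)\<^sup>2 * \<rho> m k x))"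
      using i nn by (intro member_le_sum) auto
    also have "\<dots> \<le> 4 * (\<Sum>k\<in>{1..n}. ln 4 * \<beta>m m k + (1/2) * (norm (v k))\<^sup>2 * \<beta>m m k)"
      using \<rho>_in \<rho>_min A_nonneg by (intro key) auto
    also have "\<dots> \<le> ?C"
    proof -
      have "ln 4 * \<beta>m m k + (1/2) * (norm (v k))\<^sup>2 * \<beta>m m k \<le> ln 4 * \<beta> k + (1/2) * (norm (v k))\<^sup>2 * \<beta> k"
        if k: "k \<in> {1..n}" for k
      proof -
        have lt: "\<beta>m m k \<le> \<beta> k" using \<beta>m_less k by (simp add: less_imp_le)
        have "ln 4 * \<beta>m m k \<le> ln 4 * \<beta> k" using lt by (intro mult_left_mono) auto
        moreover have "(1/2) * (norm (v k))\<^sup>2 * \<beta>m m k \<le> (1/2) * (norm (v k))\<^sup>2 * \<beta> k"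
          using lt by (intro mult_left_mono) auto
        ultimately show ?thesis by linarith
      qed
      then show ?thesis by (intro mult_left_mono sum_mono) auto
    qed
    finally show "integral\<^sup>L lebesgue (\<lambda>x. (norm x)\<^sup>2 * \<rho> m i x) \<le> ?C" .
  qed
qed

end
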